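(* Suppose $M:\alpha\mapsto M_\alpha=(E,\mathcal{B}_\alpha)$ is a matroid flock with support matroid $N=(E,\mathcal{B})$. Then $\mathcal{B}=\bigcup_{\alpha\in\mathbb{Z}^E}\mathcal{B}_\alpha$.
   Context: $E$ is a finite set; $(E,\mathcal{B})$ denotes the matroid on $E$ with basis set $\mathcal{B}$. $e_I:=\sum_{i\in I}e_i$ ($e_i$ unit vectors), $\mathbf{1}:=e_E$. A matroid flock of rank $d$ on $E$ is a map $M$ assigning to each $\alpha\in\mathbb{Z}^E$ a matroid $M_\alpha$ on $E$ of rank $d$ with (MF1) $M_\alpha/i=M_{\alpha+e_i}\setminus i$ for all $\alpha$, $i$ (contraction, deletion); and (MF2) $M_\alpha=M_{\alpha+\mathbf{1}}$. With $r_\alpha$ the rank function of $M_\alpha$, let $g$ be the unique function $\mathbb{Z}^E\to\mathbb{Z}$ with $g(0)=0$ and $g(\alpha+e_I)=g(\alpha)+r_\alpha(I)$ for all $\alpha,I$; for $d$-subsets $B$ of $E$ put $\nu^M(B):=\sup\{e_B^T\alpha-g(\alpha):\alpha\in\mathbb{Z}^E\}\in\mathbb{Z}\cup\{\infty\}$. The support matroid of $M$ is the matroid on $E$ whose bases are the $d$-subsets $B$ with $\nu^M(B)<\infty$. *)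

theory Defs
  imports Complex_Main "HOL-Library.Extended_Real"
begin

text \<open>Ground set E is the (finite) universe of the type 'a. A matroid on a ground set
  is represented by its set of bases.\<close>

definition matroid_bases :: "'a set \<Rightarrow> 'a set set \<Rightarrow> bool" where
  "matroid_bases E Bs \<longleftrightarrow> Bs \<noteq> {} \<and> (\<forall>B\<in>Bs. B \<subseteq> E) \<and>
     (\<forall>B1\<in>Bs. \<forall>B2\<in>Bs. \<forall>x\<in>B1 - B2. \<exists>y\<in>B2 - B1. insert y (B1 - {x}) \<in> Bs)"

definition matroid_rank_d :: "'a set \<Rightarrow> nat \<Rightarrow> 'a set set \<Rightarrow> bool" where
  "matroid_rank_d E d Bs \<longleftrightarrow> matroid_bases E Bs \<and> (\<forall>B\<in>Bs. card B = d)"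

definition contract :: "'a set set \<Rightarrow> 'a \<Rightarrow> 'a set set" where
  "contract Bs i = (if \<exists>B\<in>Bs. i \<in> B then {B - {i} | B. B \<in> Bs \<and> i \<in> B} else Bs)"

definition delete :: "'a set set \<Rightarrow> 'a \<Rightarrow> 'a set set" where
  "delete Bs i = (if \<exists>B\<in>Bs. i \<notin> B then {B \<in> Bs. i \<notin> B} else {B - {i} | B. B \<in> Bs})"

definition mrank :: "'a set set \<Rightarrow> 'a set \<Rightarrow> nat" where
  "mrank Bs I = Max ((\<lambda>B. card (I \<inter> B)) ` Bs)"

definition unitv :: "'a \<Rightarrow> 'a \<Rightarrow> int" where
  "unitv i = (\<lambda>j. if j = i then 1 else 0)"

definition indv :: "'a set \<Rightarrow> 'a \<Rightarrow> int" where
  "indv I = (\<lambda>j. if j \<in> I then 1 else 0)"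

definition matroid_flock :: "nat \<Rightarrow> (('a::finite \<Rightarrow> int) \<Rightarrow> 'a set set) \<Rightarrow> bool" where
  "matroid_flock d M \<longleftrightarrow>
     (\<forall>\<alpha>. matroid_rank_d UNIV d (M \<alpha>)) \<and>
     (\<forall>\<alpha> i. contract (M \<alpha>) i = delete (M (\<lambda>j. \<alpha> j + unitv i j)) i) \<and>
     (\<forall>\<alpha>. M \<alpha> = M (\<lambda>j. \<alpha> j + 1))"

definition flock_g :: "(('a::finite \<Rightarrow> int) \<Rightarrow> 'a set set) \<Rightarrow> ('a \<Rightarrow> int) \<Rightarrow> int" where
  "flock_g M = (THE g. g (\<lambda>_. 0) = 0 \<and>
      (\<forall>\<alpha> I. g (\<lambda>j. \<alpha> j + indv I j) = g \<alpha> + int (mrank (M \<alpha>) I)))"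

definition flock_nu :: "(('a::finite \<Rightarrow> int) \<Rightarrow> 'a set set) \<Rightarrow> 'a set \<Rightarrow> ereal" where
  "flock_nu M B = (SUP \<alpha>. ereal (of_int ((\<Sum>i\<in>B. \<alpha> i) - flock_g M \<alpha>)))"

definition support_bases :: "nat \<Rightarrow> (('a::finite \<Rightarrow> int) \<Rightarrow> 'a set set) \<Rightarrow> 'a set set" where
  "support_bases d M = {B. card B = d \<and> flock_nu M B < \<infinity>}"

end

theory Submission
  imports Defs
begin


lemma mrank_ge_gen: "B \<in> Cs \<Longrightarrow> card (I \<inter> B) \<le> mrank (Cs :: ('a::finite) set set) I"
  unfolding mrank_def by (rule Max_ge) auto

lemma mrank_obt_gen: "Cs \<noteq> {} \<Longrightarrow> \<exists>B\<in>Cs. mrank (Cs :: ('a::finite) set set) I = card (I \<inter> B)"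
proof -
  assume "Cs \<noteq> {}"
  then have "mrank Cs I \<in> (\<lambda>B. card (I \<inter> B)) ` Cs" unfolding mrank_def by (intro Max_in) auto
  then show ?thesis by auto
qed

context
  fixes Bs :: "('a::finite) set set" and d :: nat
  assumes mat: "matroid_rank_d UNIV d Bs"
begin

lemma ne: "Bs \<noteq> {}" using mat unfolding matroid_rank_d_def matroid_bases_def by auto

lemma cardB: "B \<in> Bs \<Longrightarrow> card B = d" using mat unfolding matroid_rank_d_def by auto

lemma exch: "B1\<in>Bs \<Longrightarrow> B2\<in>Bs \<Longrightarrow> x\<in>B1-B2 \<Longrightarrow> \<exists>y\<in>B2-B1. insert y (B1-{x}) \<in> Bs"
  using mat unfolding matroid_rank_d_def matroid_bases_def by blast

lemma mrank_UNIV: "mrank Bs UNIV = d"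
proof -
  obtain B where "B \<in> Bs" "mrank Bs UNIV = card (UNIV \<inter> B)" using mrank_obt_gen ne by blast
  then show ?thesis using cardB by auto
qed

lemma mrank_empty: "mrank Bs {} = 0"
proof -
  obtain B where "B \<in> Bs" "mrank Bs {} = card ({} \<inter> B)" using mrank_obt_gen ne by blast
  then show ?thesis by auto
qed

lemma mrank_single: "mrank Bs {i} = (if \<exists>B\<in>Bs. i\<in>B then 1 else 0)"
proof -
  obtain B where B: "B \<in> Bs" "mrank Bs {i} = card ({i} \<inter> B)" using mrank_obt_gen ne by blast
  show ?thesis
  proof (cases "\<exists>B\<in>Bs. i\<in>B")
    case True
    then obtain B' where "B' \<in> Bs" "i \<in> B'" by blast
    then have "card ({i} \<inter> B') \<le> mrank Bs {i}" using mrank_ge_gen by blast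
    moreover have "card ({i} \<inter> B') = 1" using \<open>i \<in> B'\<close> by simp
    moreover have "card ({i} \<inter> B) \<le> 1" by (simp add: card_le_Suc0_iff_eq)
    ultimately show ?thesis using True B by auto
  next
    case False
    then show ?thesis using B by auto
  qed
qed

lemma mrank_delete: assumes "i \<notin> Y" shows "mrank (delete Bs i) Y = mrank Bs Y"
proof (cases "\<exists>B\<in>Bs. i \<notin> B")
  case True
  hence D: "delete Bs i = {B\<in>Bs. i\<notin>B}" by (simp add: delete_def)
  show ?thesis
  proof (rule antisym)
    obtain B where B: "B \<in> delete Bs i" "mrank (delete Bs i) Y = card (Y\<inter>B)"
      using mrank_obt_gen[of "delete Bs i" Y] D True by auto
    then show "mrank (delete Bs i) Y \<le> mrank Bs Y" using mrank_ge_gen D by auto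
  next
    obtain B where B: "B\<in>Bs" "mrank Bs Y = card (Y\<inter>B)" using mrank_obt_gen ne by blast
    show "mrank Bs Y \<le> mrank (delete Bs i) Y"
    proof (cases "i \<in> B")
      case False
      then have "B \<in> delete Bs i" using D B by auto
      then show ?thesis using B mrank_ge_gen by metis
    next
      case iB: True
      obtain B0 where B0: "B0\<in>Bs" "i\<notin>B0" using True by blast
      obtain y where y: "y \<in> B0 - B" "insert y (B - {i}) \<in> Bs" using exch[of B B0 i] B B0 iB by blast
      have "insert y (B - {i}) \<in> delete Bs i" using y B0 D by auto
      then have "card (Y \<inter> insert y (B - {i})) \<le> mrank (delete Bs i) Y" using mrank_ge_gen by metis
      moreover have "card (Y \<inter> B) \<le> card (Y \<inter> insert y (B - {i}))"
        by (rule card_mono) (use assms in auto)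
      ultimately show ?thesis using B by auto
    qed
  qed
next
  case False
  hence D: "delete Bs i = (\<lambda>B. B - {i}) ` Bs" by (auto simp: delete_def)
  have e: "\<And>B. Y \<inter> (B - {i}) = Y \<inter> B" using assms by auto
  have "(\<lambda>B. card (Y \<inter> B)) ` ((\<lambda>B. B - {i}) ` Bs) = (\<lambda>B. card (Y \<inter> B)) ` Bs"
    by (simp add: image_image e)
  thus ?thesis unfolding mrank_def D by simp
qed

lemma get_i: assumes "B \<in> Bs" "B0 \<in> Bs" "i \<in> B0" "i \<notin> B"
  shows "\<exists>C\<in>Bs. i \<in> C \<and> C - B = {i}"
proof -
  let ?S = "{C\<in>Bs. i \<in> C}"
  let ?m = "Max ((\<lambda>C. card (C \<inter> B)) ` ?S)"
  have ne2: "?S \<noteq> {}" using assms by blast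
  have "?m \<in> (\<lambda>C. card (C \<inter> B)) ` ?S" by (rule Max_in) (simp, use ne2 in blast)
  then obtain C where C: "C \<in> Bs" "i \<in> C" "card (C \<inter> B) = ?m" by auto
  have mx: "card (C' \<inter> B) \<le> card (C \<inter> B)" if "C' \<in> Bs" "i \<in> C'" for C'
  proof -
    have "C' \<in> ?S" using that by simp
    then have "card (C' \<inter> B) \<in> (\<lambda>C. card (C \<inter> B)) ` ?S" by (rule imageI)
    then have "card (C' \<inter> B) \<le> ?m" by (intro Max_ge) simp_all
    then show ?thesis using C(3) by simp
  qed
  have "\<forall>x\<in>C-B. x = i"
  proof (rule ccontr)
    assume "\<not> (\<forall>x\<in>C-B. x = i)"
    then obtain x where x: "x \<in> C - B" "x \<noteq> i" by blast
    obtain y where y: "y \<in> B - C" "insert y (C - {x}) \<in> Bs" using exch[of C B x] C assms x by blast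
    have "insert y (C - {x}) \<inter> B = insert y (C \<inter> B)" using x y by auto
    then have "card (insert y (C - {x}) \<inter> B) = Suc (card (C \<inter> B))" using y by simp
    moreover have "i \<in> insert y (C - {x})" using C x by auto
    ultimately show False using mx[OF y(2)] by simp
  qed
  moreover have "i \<in> C - B" using C(2) assms(4) by blast
  ultimately have "C - B = {i}" by blast
  then show ?thesis using C by blast
qed

lemma swap_card: assumes "B \<in> Bs" "C \<in> Bs" "C - B = {i}" "i \<in> X"
  shows "card (X \<inter> B) \<le> card (X \<inter> C)"
proof -
  have iB: "i \<notin> B" "i \<in> C" using assms by auto
  have "C = insert i (C \<inter> B)" using assms by auto
  then have c1: "card C = Suc (card (C \<inter> B))" using iB by (metis card_insert_disjoint finite IntD2)
  have "card B = card (B \<inter> C) + card (B - C)"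
    by (metis card_Int_Diff finite)
  then have c2: "card (B - C) = 1" using c1 cardB assms by (simp add: Int_commute)
  have "X \<inter> B \<subseteq> (X \<inter> B \<inter> C) \<union> (B - C)" by auto
  then have "card (X \<inter> B) \<le> card (X \<inter> B \<inter> C) + card (B - C)"
    by (meson card_Un_le card_mono finite le_trans)
  moreover have "insert i (X \<inter> B \<inter> C) \<subseteq> X \<inter> C" using assms by auto
  then have "card (insert i (X \<inter> B \<inter> C)) \<le> card (X \<inter> C)" by (simp add: card_mono)
  moreover have "card (insert i (X \<inter> B \<inter> C)) = Suc (card (X \<inter> B \<inter> C))" using iB by simp
  ultimately show ?thesis using c2 by simp
qed

lemma mrank_contract: assumes "i \<notin> Y"
  shows "mrank (contract Bs i) Y + mrank Bs {i} = mrank Bs (insert i Y)"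
proof (cases "\<exists>B\<in>Bs. i \<in> B")
  case True
  hence D: "contract Bs i = (\<lambda>B. B - {i}) ` {B\<in>Bs. i\<in>B}" by (auto simp: contract_def)
  have r1: "mrank Bs {i} = 1" using True mrank_single by simp
  have cc: "card (insert i Y \<inter> B) = Suc (card (Y \<inter> (B - {i})))" if "i \<in> B" for B
  proof -
    have "insert i Y \<inter> B = insert i (Y \<inter> (B - {i}))" using that by auto
    then show ?thesis by simp
  qed
  show ?thesis
  proof (rule antisym)
    obtain B' where B': "B' \<in> contract Bs i" "mrank (contract Bs i) Y = card (Y\<inter>B')"
      using mrank_obt_gen[of "contract Bs i" Y] D True by auto
    then obtain B where B: "B \<in> Bs" "i \<in> B" "B' = B - {i}" using D by auto
    have "card (insert i Y \<inter> B) \<le> mrank Bs (insert i Y)" using mrank_ge_gen B by metis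
    then show "mrank (contract Bs i) Y + mrank Bs {i} \<le> mrank Bs (insert i Y)"
      using cc[OF B(2)] B B' r1 by simp
  next
    obtain B where B: "B\<in>Bs" "mrank Bs (insert i Y) = card (insert i Y \<inter> B)"
      using mrank_obt_gen ne by blast
    obtain C where C: "C \<in> Bs" "i \<in> C" "card (insert i Y \<inter> B) \<le> card (insert i Y \<inter> C)"
    proof (cases "i \<in> B")
      case True then show ?thesis using that B by blast
    next
      case False
      obtain B0 where "B0 \<in> Bs" "i \<in> B0" using \<open>\<exists>B\<in>Bs. i \<in> B\<close> by blast
      then obtain C where "C\<in>Bs" "i \<in> C" "C - B = {i}" using get_i B False by blast
      then show ?thesis using that swap_card[of B C i "insert i Y"] B by auto
    qed
    have "C - {i} \<in> contract Bs i" using D C by auto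
    then have "card (Y \<inter> (C - {i})) \<le> mrank (contract Bs i) Y" using mrank_ge_gen by metis
    then show "mrank Bs (insert i Y) \<le> mrank (contract Bs i) Y + mrank Bs {i}"
      using B C cc[OF C(2)] r1 by simp
  qed
next
  case False
  hence D: "contract Bs i = Bs" by (auto simp: contract_def)
  have "mrank Bs {i} = 0" using False mrank_single by simp
  moreover have e: "\<And>B. B \<in> Bs \<Longrightarrow> insert i Y \<inter> B = Y \<inter> B" using False by auto
  have "(\<lambda>B. card (insert i Y \<inter> B)) ` Bs = (\<lambda>B. card (Y \<inter> B)) ` Bs"
    by (rule image_cong) (simp_all add: e)
  then have "mrank Bs (insert i Y) = mrank Bs Y" unfolding mrank_def by simp
  ultimately show ?thesis using D by simp
qed

end



lemma unitv_indv: "unitv i = indv {i}" by (rule ext) (simp add: unitv_def indv_def)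

lemma indv_empty[simp]: "indv {} = (\<lambda>_. 0)" by (rule ext) (simp add: indv_def)

lemma indv_insert: "i \<notin> I \<Longrightarrow> indv (insert i I) j = indv {i} j + indv I j"
  by (simp add: indv_def)

context
  fixes M :: "('a::finite \<Rightarrow> int) \<Rightarrow> 'a set set" and d :: nat
  assumes fl: "matroid_flock d M"
begin

lemma matM: "matroid_rank_d UNIV d (M \<alpha>)" using fl unfolding matroid_flock_def by blast

lemma mf1: "contract (M \<alpha>) i = delete (M (\<lambda>j. \<alpha> j + indv {i} j)) i"
  using fl unfolding matroid_flock_def unitv_indv by blast

lemma F: assumes "i \<notin> Y"
  shows "mrank (M \<alpha>) (insert i Y) = mrank (M \<alpha>) {i} + mrank (M (\<lambda>j. \<alpha> j + indv {i} j)) Y"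
  using mrank_contract[OF matM assms, of \<alpha>] mrank_delete[OF matM assms, of "\<lambda>j. \<alpha> j + indv {i} j"]
    mf1[of \<alpha> i] by simp

lemma L: "finite I \<Longrightarrow> j \<notin> I \<Longrightarrow>
  int (mrank (M \<alpha>) (insert j I)) - int (mrank (M \<alpha>) I) = int (mrank (M (\<lambda>k. \<alpha> k + indv I k)) {j})"
proof (induction I arbitrary: \<alpha> rule: finite_induct)
  case empty
  then show ?case using mrank_empty[OF matM] by simp
next
  case (insert i I)
  let ?a = "\<lambda>j. \<alpha> j + indv {i} j"
  have "i \<notin> insert j I" using insert by auto
  from F[OF this, of \<alpha>] have e1: "mrank (M \<alpha>) (insert i (insert j I)) = mrank (M \<alpha>) {i} + mrank (M ?a) (insert j I)" .
  from F[OF insert(2), of \<alpha>] have e2: "mrank (M \<alpha>) (insert i I) = mrank (M \<alpha>) {i} + mrank (M ?a) I" .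
  have IH: "int (mrank (M ?a) (insert j I)) - int (mrank (M ?a) I) = int (mrank (M (\<lambda>k. ?a k + indv I k)) {j})"
    using insert by simp
  have v: "(\<lambda>k. ?a k + indv I k) = (\<lambda>k. \<alpha> k + indv (insert i I) k)"
    by (rule ext) (simp add: indv_insert[OF insert(2)])
  have s: "insert j (insert i I) = insert i (insert j I)" by blast
  show ?case using e1 e2 IH v s by simp
qed

end



definition gm :: "('a \<Rightarrow> int) \<Rightarrow> int \<Rightarrow> 'a \<Rightarrow> int" where "gm \<alpha> t = (\<lambda>j. min (\<alpha> j) t)"
definition St :: "('a \<Rightarrow> int) \<Rightarrow> int \<Rightarrow> 'a set" where "St \<alpha> t = {j. t < \<alpha> j}"
definition GG :: "nat \<Rightarrow> (('a::finite \<Rightarrow> int) \<Rightarrow> 'a set set) \<Rightarrow> int \<Rightarrow> int \<Rightarrow> ('a \<Rightarrow> int) \<Rightarrow> int" where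
  "GG d M L U \<alpha> = L * int d + (\<Sum>t\<in>{L..<U}. int (mrank (M (gm \<alpha> t)) (St \<alpha> t)))"
definition NN :: "('a::finite \<Rightarrow> int) \<Rightarrow> int" where "NN \<alpha> = (\<Sum>j\<in>UNIV. \<bar>\<alpha> j\<bar>)"
definition g0 :: "nat \<Rightarrow> (('a::finite \<Rightarrow> int) \<Rightarrow> 'a set set) \<Rightarrow> ('a \<Rightarrow> int) \<Rightarrow> int" where
  "g0 d M \<alpha> = GG d M (- NN \<alpha>) (NN \<alpha>) \<alpha>"

lemma NN_bound: "\<bar>\<alpha> j\<bar> \<le> NN \<alpha>"
  unfolding NN_def by (rule member_le_sum) auto

lemma GG_Suc: "L \<le> U \<Longrightarrow> GG d M L (U+1) \<alpha> = GG d M L U \<alpha> + int (mrank (M (gm \<alpha> U)) (St \<alpha> U))"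
proof -
  assume "L \<le> U"
  then have "{L..<U+1} = insert U {L..<U}" by auto
  then show ?thesis unfolding GG_def by simp
qed

context
  fixes M :: "('a::finite \<Rightarrow> int) \<Rightarrow> 'a set set" and d :: nat
  assumes fl: "matroid_flock d M"
begin

lemma GG_low: assumes "\<forall>j. L \<le> \<alpha> j" "L \<le> U" shows "GG d M (L - 1) U \<alpha> = GG d M L U \<alpha>"
proof -
  have "{L - 1..<U} = insert (L - 1) {L..<U}" using assms by auto
  moreover have "St \<alpha> (L - 1) = UNIV"
  proof -
    have "L - 1 < \<alpha> j" for j using assms(1)[rule_format, of j] by simp
    then show ?thesis unfolding St_def by blast
  qed
  ultimately show ?thesis unfolding GG_def using mrank_UNIV[OF matM[OF fl]]
    by (simp add: algebra_simps)
qed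

lemma GG_high: assumes "\<forall>j. \<alpha> j \<le> U" "L \<le> U" shows "GG d M L (U+1) \<alpha> = GG d M L U \<alpha>"
proof -
  have "St \<alpha> U = {}"
  proof -
    have "\<not> U < \<alpha> j" for j using assms(1)[rule_format, of j] by simp
    then show ?thesis unfolding St_def by blast
  qed
  then show ?thesis using GG_Suc[OF assms(2), of d M \<alpha>] mrank_empty[OF matM[OF fl], of "gm \<alpha> U"] by simp
qed

lemma GG_low_k: assumes "\<forall>j. L \<le> \<alpha> j" "L \<le> U" shows "GG d M (L - int k) U \<alpha> = GG d M L U \<alpha>"
proof (induction k)
  case 0 then show ?case by simp
next
  case (Suc k)
  have "GG d M (L - int k - 1) U \<alpha> = GG d M (L - int k) U \<alpha>"
    by (rule GG_low) (use assms in \<open>auto intro: order_trans[of _ L]\<close>)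
  then show ?case using Suc by (simp add: algebra_simps)
qed

lemma GG_high_k: assumes "\<forall>j. \<alpha> j \<le> U" "L \<le> U" shows "GG d M L (U + int k) \<alpha> = GG d M L U \<alpha>"
proof (induction k)
  case 0 then show ?case by simp
next
  case (Suc k)
  have "GG d M L (U + int k + 1) \<alpha> = GG d M L (U + int k) \<alpha>"
    by (rule GG_high) (use assms in \<open>auto intro: order_trans[of _ U]\<close>)
  then show ?case using Suc by (simp add: algebra_simps)
qed

lemma GG_base: assumes "\<forall>j. L \<le> \<alpha> j \<and> \<alpha> j \<le> U" "L' \<le> L" "U \<le> U'"
  shows "GG d M L' U' \<alpha> = GG d M L U \<alpha>"
proof -
  have LU: "L \<le> U" using assms(1) by (meson order_trans)
  have "GG d M (L - int (nat (L - L'))) U \<alpha> = GG d M L U \<alpha>"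
    by (rule GG_low_k) (use assms LU in auto)
  then have 1: "GG d M L' U \<alpha> = GG d M L U \<alpha>" using assms by simp
  have "GG d M L' (U + int (nat (U' - U))) \<alpha> = GG d M L' U \<alpha>"
    by (rule GG_high_k) (use assms LU in auto)
  then have 2: "GG d M L' U' \<alpha> = GG d M L' U \<alpha>" using assms by simp
  show ?thesis using 1 2 by simp
qed

lemma g0_eq: assumes "\<forall>j. L \<le> \<alpha> j \<and> \<alpha> j \<le> U" shows "g0 d M \<alpha> = GG d M L U \<alpha>"
proof -
  have b: "\<forall>j. - NN \<alpha> \<le> \<alpha> j \<and> \<alpha> j \<le> NN \<alpha>" using NN_bound by (metis abs_le_D1 abs_le_D2 minus_le_iff)
  have "GG d M (min L (- NN \<alpha>)) (max U (NN \<alpha>)) \<alpha> = GG d M L U \<alpha>"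
    by (rule GG_base) (use assms in auto)
  moreover have "GG d M (min L (- NN \<alpha>)) (max U (NN \<alpha>)) \<alpha> = GG d M (- NN \<alpha>) (NN \<alpha>) \<alpha>"
    by (rule GG_base) (use b in auto)
  ultimately show ?thesis unfolding g0_def by simp
qed

end



lemma gm_step: "(\<lambda>j. gm \<alpha> t j + indv (St \<alpha> t) j) = gm \<alpha> (t+1)"
  by (rule ext) (auto simp: gm_def indv_def St_def min_def)

context
  fixes M :: "('a::finite \<Rightarrow> int) \<Rightarrow> 'a set set" and d :: nat
  assumes fl: "matroid_flock d M"
begin

lemma tele: assumes "L \<le> \<alpha> i"
  shows "GG d M L (\<alpha> i + 1 + int k) (\<lambda>j. \<alpha> j + indv {i} j) - GG d M L (\<alpha> i + 1 + int k) \<alpha>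
    = int (mrank (M (gm \<alpha> (\<alpha> i + 1 + int k))) {i})"
proof (induction k)
  case 0
  let ?a = "\<alpha> i"
  let ?b = "\<lambda>j. \<alpha> j + indv {i} j"
  have gmeq: "gm ?b t = gm \<alpha> t" if "t \<le> ?a" for t
    using that by (intro ext) (auto simp: gm_def indv_def min_def)
  have Steq: "St ?b t = St \<alpha> t" if "t < ?a" for t
    using that by (auto simp: St_def indv_def)
  have s1: "GG d M L ?a ?b = GG d M L ?a \<alpha>"
    unfolding GG_def by (intro arg_cong2[where f="(+)"] refl sum.cong) (auto simp: gmeq Steq)
  have Sa: "St ?b ?a = insert i (St \<alpha> ?a)" by (auto simp: St_def indv_def)
  have iS: "i \<notin> St \<alpha> ?a" by (simp add: St_def)
  have Lf: "int (mrank (M (gm \<alpha> ?a)) (insert i (St \<alpha> ?a))) - int (mrank (M (gm \<alpha> ?a)) (St \<alpha> ?a))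
      = int (mrank (M (gm \<alpha> (?a + 1))) {i})"
    using L[OF fl _ iS, of "gm \<alpha> ?a"] gm_step[of \<alpha> ?a] by simp
  show ?case using GG_Suc[OF assms, of d M ?b] GG_Suc[OF assms, of d M \<alpha>] s1 Sa Lf gmeq[of ?a] by simp
next
  case (Suc k)
  let ?U = "\<alpha> i + 1 + int k"
  let ?b = "\<lambda>j. \<alpha> j + indv {i} j"
  have LU: "L \<le> ?U" using assms by simp
  have e: "\<alpha> i + 1 + int (Suc k) = ?U + 1" by simp
  have gmU: "gm ?b ?U = (\<lambda>j. gm \<alpha> ?U j + indv {i} j)"
    by (intro ext) (auto simp: gm_def indv_def min_def)
  have StU: "St ?b ?U = St \<alpha> ?U" by (auto simp: St_def indv_def)
  have iS: "i \<notin> St \<alpha> ?U" by (simp add: St_def)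
  have f1: "mrank (M (gm \<alpha> ?U)) (insert i (St \<alpha> ?U)) = mrank (M (gm \<alpha> ?U)) {i} + mrank (M (gm ?b ?U)) (St \<alpha> ?U)"
    using F[OF fl iS, of "gm \<alpha> ?U"] gmU by simp
  have f2: "int (mrank (M (gm \<alpha> ?U)) (insert i (St \<alpha> ?U))) - int (mrank (M (gm \<alpha> ?U)) (St \<alpha> ?U))
      = int (mrank (M (gm \<alpha> (?U + 1))) {i})"
    using L[OF fl _ iS, of "gm \<alpha> ?U"] gm_step[of \<alpha> ?U] by simp
  show ?case unfolding e using GG_Suc[OF LU, of d M ?b] GG_Suc[OF LU, of d M \<alpha>] Suc.IH StU f1 f2 by simp
qed

lemma g0_step: "g0 d M (\<lambda>j. \<alpha> j + indv {i} j) = g0 d M \<alpha> + int (mrank (M \<alpha>) {i})"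
proof -
  let ?b = "\<lambda>j. \<alpha> j + indv {i} j"
  let ?L = "- NN \<alpha>"
  let ?U = "\<alpha> i + 1 + int (nat (NN \<alpha> - \<alpha> i))"
  have bd: "- NN \<alpha> \<le> \<alpha> j \<and> \<alpha> j \<le> NN \<alpha>" for j using NN_bound[of \<alpha> j] by linarith
  have U: "?U = NN \<alpha> + 1" using bd[of i] by simp
  have b1: "\<forall>j. ?L \<le> \<alpha> j \<and> \<alpha> j \<le> ?U" using bd U by (metis add_increasing2 le_add_same_cancel1 zero_le_one order_trans)
  have b2: "\<forall>j. ?L \<le> ?b j \<and> ?b j \<le> ?U"
  proof
    fix j
    have "0 \<le> indv {i} j" "indv {i} j \<le> 1" by (auto simp: indv_def)
    then show "?L \<le> ?b j \<and> ?b j \<le> ?U" using bd[of j] U by linarith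
  qed
  have "gm \<alpha> ?U = \<alpha>" using b1 by (intro ext) (simp add: gm_def)
  moreover have "?L \<le> \<alpha> i" using bd by blast
  ultimately show ?thesis using tele[of ?L \<alpha> i "nat (NN \<alpha> - \<alpha> i)"] g0_eq[OF fl b1] g0_eq[OF fl b2] by simp
qed

lemma g0_I: "g0 d M (\<lambda>j. \<alpha> j + indv I j) = g0 d M \<alpha> + int (mrank (M \<alpha>) I)"
proof -
  have "finite I" by simp
  then show ?thesis
  proof (induction I arbitrary: \<alpha> rule: finite_induct)
    case empty
    then show ?case using mrank_empty[OF matM[OF fl]] by simp
  next
    case (insert i I)
    let ?b = "\<lambda>j. \<alpha> j + indv {i} j"
    have v: "(\<lambda>j. \<alpha> j + indv (insert i I) j) = (\<lambda>j. ?b j + indv I j)"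
      by (rule ext) (simp add: indv_insert[OF insert(2)])
    show ?case unfolding v using insert.IH[of ?b] g0_step[of \<alpha> i] F[OF fl insert(2), of \<alpha>] by simp
  qed
qed

lemma g0_zero: "g0 d M (\<lambda>_. 0) = 0"
  unfolding g0_def GG_def NN_def by simp

end

lemma NN_nonneg: "0 \<le> NN \<alpha>" unfolding NN_def by (simp add: sum_nonneg)

lemma uniq_g:
  fixes g1 g2 :: "('a::finite \<Rightarrow> int) \<Rightarrow> int"
  assumes "g1 (\<lambda>_. 0) = 0" "g2 (\<lambda>_. 0) = 0"
    "\<And>\<alpha> i. g1 (\<lambda>j. \<alpha> j + indv {i} j) = g1 \<alpha> + c \<alpha> i"
    "\<And>\<alpha> i. g2 (\<lambda>j. \<alpha> j + indv {i} j) = g2 \<alpha> + c \<alpha> i"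
  shows "g1 \<alpha> = g2 \<alpha>"
proof (induction "nat (NN \<alpha>)" arbitrary: \<alpha> rule: less_induct)
  case less
  show ?case
  proof (cases "\<forall>j. \<alpha> j = 0")
    case True
    then have "\<alpha> = (\<lambda>_. 0)" by auto
    then show ?thesis using assms by simp
  next
    case False
    then obtain j where j: "\<alpha> j \<noteq> 0" by blast
    show ?thesis
    proof (cases "\<alpha> j > 0")
      case True
      let ?b = "\<lambda>k. \<alpha> k - indv {j} k"
      have a: "\<alpha> = (\<lambda>k. ?b k + indv {j} k)" by auto
      have "NN ?b < NN \<alpha>" unfolding NN_def
        by (rule sum_strict_mono_ex1) (use True in \<open>auto simp: indv_def\<close>)
      then have "nat (NN ?b) < nat (NN \<alpha>)" using NN_nonneg[of ?b] by simp
      then have "g1 ?b = g2 ?b" using less by blast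
      then show ?thesis using assms(3)[of ?b j] assms(4)[of ?b j] a by metis
    next
      case False
      let ?b = "\<lambda>k. \<alpha> k + indv {j} k"
      have "NN ?b < NN \<alpha>" unfolding NN_def
        by (rule sum_strict_mono_ex1) (use False j in \<open>auto simp: indv_def\<close>)
      then have "nat (NN ?b) < nat (NN \<alpha>)" using NN_nonneg[of ?b] by simp
      then have "g1 ?b = g2 ?b" using less by blast
      then show ?thesis using assms(3)[of \<alpha> j] assms(4)[of \<alpha> j] by simp
    qed
  qed
qed

lemma gprop: assumes fl: "matroid_flock d M"
  shows "flock_g M (\<lambda>_. 0) = 0 \<and> (\<forall>\<alpha> I. flock_g M (\<lambda>j. \<alpha> j + indv I j) = flock_g M \<alpha> + int (mrank (M \<alpha>) I))"
proof -
  let ?P = "\<lambda>g. g (\<lambda>_. 0) = 0 \<and> (\<forall>\<alpha> I. g (\<lambda>j. \<alpha> j + indv I j) = g \<alpha> + int (mrank (M \<alpha>) I))"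
  have ex: "?P (g0 d M)" using g0_zero[OF fl] g0_I[OF fl] by blast
  have un: "g = g0 d M" if "?P g" for g
  proof (rule ext)
    fix \<alpha>
    show "g \<alpha> = g0 d M \<alpha>"
      by (rule uniq_g[where c = "\<lambda>\<alpha> i. int (mrank (M \<alpha>) {i})"]) (use that ex in blast)+
  qed
  have "?P (THE g. ?P g)" by (rule theI[of ?P, OF ex un])
  then show ?thesis unfolding flock_g_def .
qed



context
  fixes M :: "('a::finite \<Rightarrow> int) \<Rightarrow> 'a set set" and d :: nat
  assumes fl: "matroid_flock d M"
begin

lemma g00: "flock_g M (\<lambda>_. 0) = 0" using gprop[OF fl] by blast
lemma gI: "flock_g M (\<lambda>j. \<alpha> j + indv I j) = flock_g M \<alpha> + int (mrank (M \<alpha>) I)"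
  using gprop[OF fl] by blast

lemma sub1: assumes "B \<in> support_bases d M" shows "\<exists>\<alpha>. B \<in> M \<alpha>"
proof (rule ccontr)
  assume nB: "\<not> (\<exists>\<alpha>. B \<in> M \<alpha>)"
  have cB: "card B = d" and fin: "flock_nu M B < \<infinity>" using assms unfolding support_bases_def by auto
  have rlt: "int (mrank (M \<alpha>) B) \<le> int d - 1" for \<alpha>
  proof -
    have "M \<alpha> \<noteq> {}" using ne[OF matM[OF fl]] .
    from mrank_obt_gen[OF this, of B] obtain B' where B': "B' \<in> M \<alpha>" "mrank (M \<alpha>) B = card (B \<inter> B')"
      by blast
    have cB': "card B' = d" using cardB[OF matM[OF fl] B'(1)] .
    have le: "card (B \<inter> B') \<le> card B'" by (rule card_mono) auto
    have "card (B \<inter> B') \<noteq> d"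
    proof
      assume h: "card (B \<inter> B') = d"
      have "B \<inter> B' = B'" by (rule card_subset_eq) (use h cB' in auto)
      moreover have "B \<inter> B' = B" by (rule card_subset_eq) (use h cB in auto)
      ultimately show False using nB B'(1) by auto
    qed
    then show ?thesis using le cB' B'(2) by simp
  qed
  define v where "v k = (\<lambda>j. int k * indv B j)" for k :: nat
  have gv: "flock_g M (v k) \<le> int k * (int d - 1)" for k
  proof (induction k)
    case 0
    have "v 0 = (\<lambda>_. 0)" by (simp add: v_def)
    then show ?case using g00 by simp
  next
    case (Suc k)
    have "v (Suc k) = (\<lambda>j. v k j + indv B j)" by (rule ext) (simp add: v_def algebra_simps)
    then have "flock_g M (v (Suc k)) = flock_g M (v k) + int (mrank (M (v k)) B)" using gI by simp
    then show ?case using Suc rlt[of "v k"] by (simp add: algebra_simps)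
  qed
  have sv: "(\<Sum>i\<in>B. v k i) = int k * int d" for k
    using cB by (simp add: v_def indv_def)
  have "ereal (real k) \<le> flock_nu M B" for k
  proof -
    have "int k \<le> (\<Sum>i\<in>B. v k i) - flock_g M (v k)"
      using sv[of k] gv[of k] by (simp add: algebra_simps)
    then have "real_of_int (int k) \<le> real_of_int ((\<Sum>i\<in>B. v k i) - flock_g M (v k))"
      by (simp only: of_int_le_iff)
    then have "ereal (real k) \<le> ereal (real_of_int ((\<Sum>i\<in>B. v k i) - flock_g M (v k)))" by simp
    also have "\<dots> \<le> flock_nu M B" unfolding flock_nu_def by (rule SUP_upper) simp
    finally show ?thesis .
  qed
  moreover obtain n :: nat where "flock_nu M B < ereal (real n)"
    using fin less_PInf_Ex_of_nat by auto
  ultimately show False by (meson not_le)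
qed

definition fB :: "'a set \<Rightarrow> ('a \<Rightarrow> int) \<Rightarrow> int" where
  "fB B \<alpha> = (\<Sum>i\<in>B. \<alpha> i) - flock_g M \<alpha>"

lemma stepB: assumes "B \<in> M \<gamma>" "i \<in> B"
  shows "B \<in> M (\<lambda>j. \<gamma> j + indv {i} j) \<and> fB B (\<lambda>j. \<gamma> j + indv {i} j) = fB B \<gamma>"
proof
  let ?c = "\<lambda>j. \<gamma> j + indv {i} j"
  have "B - {i} \<in> contract (M \<gamma>) i" using assms unfolding contract_def by auto
  then have D: "B - {i} \<in> delete (M ?c) i" using mf1[OF fl] by simp
  have cB: "card B = d" using cardB[OF matM[OF fl] assms(1)] .
  show "B \<in> M ?c"
  proof (cases "\<exists>B'\<in>M ?c. i \<notin> B'")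
    case True
    then have "B - {i} \<in> M ?c" using D unfolding delete_def by auto
    then have "card (B - {i}) = d" using cardB[OF matM[OF fl]] by blast
    moreover have "card B > 0" using assms(2) by (auto simp: card_gt_0_iff)
    ultimately show ?thesis using cB assms(2) by (simp add: card_Diff_singleton)
  next
    case False
    then obtain B' where B': "B' \<in> M ?c" "B - {i} = B' - {i}" using D unfolding delete_def by auto
    have "i \<in> B'" using False B'(1) by blast
    then have "B' = insert i (B - {i})" using B'(2) by blast
    also have "\<dots> = B" using assms(2) by blast
    finally show ?thesis using B'(1) by simp
  qed
  have r: "mrank (M \<gamma>) {i} = 1" using mrank_single[OF matM[OF fl]] assms by auto
  have s: "(\<Sum>j\<in>B. ?c j) = (\<Sum>j\<in>B. \<gamma> j) + 1"
    using assms(2) by (simp add: sum.distrib indv_def)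
  show "fB B ?c = fB B \<gamma>" unfolding fB_def using gI[of \<gamma> "{i}"] r s by simp
qed

lemma stepN: assumes "i \<notin> B"
  shows "fB B (\<lambda>j. \<gamma> j + indv {i} j) \<le> fB B \<gamma>"
proof -
  let ?c = "\<lambda>j. \<gamma> j + indv {i} j"
  have s: "(\<Sum>j\<in>B. ?c j) = (\<Sum>j\<in>B. \<gamma> j)"
    using assms by (intro sum.cong) (auto simp: indv_def)
  show ?thesis unfolding fB_def using gI[of \<gamma> "{i}"] s by simp
qed

lemma pick: fixes \<delta> :: "'a \<Rightarrow> int" assumes "\<forall>j. 0 \<le> \<delta> j" "(\<Sum>j\<in>UNIV. \<delta> j) \<noteq> 0"
  shows "\<exists>i. 0 < \<delta> i"
proof (rule ccontr)
  assume "\<not> ?thesis"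
  then have "\<forall>j. \<delta> j = 0" using assms(1) by (meson not_less antisym)
  then show False using assms(2) by simp
qed

lemma lemA: "\<forall>\<gamma> \<delta>. nat (\<Sum>j\<in>UNIV. \<delta> j) = n \<longrightarrow> (\<forall>j. 0 \<le> \<delta> j) \<longrightarrow> (\<forall>j. j \<notin> B \<longrightarrow> \<delta> j = 0)
   \<longrightarrow> B \<in> M \<gamma> \<longrightarrow> B \<in> M (\<lambda>j. \<gamma> j + \<delta> j) \<and> fB B (\<lambda>j. \<gamma> j + \<delta> j) = fB B \<gamma>"
proof (induction n)
  case 0
  show ?case
  proof (intro allI impI)
    fix \<gamma> \<delta> :: "'a \<Rightarrow> int"
    assume h: "nat (\<Sum>j\<in>UNIV. \<delta> j) = 0" "\<forall>j. 0 \<le> \<delta> j" "\<forall>j. j \<notin> B \<longrightarrow> \<delta> j = 0" "B \<in> M \<gamma>"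
    have "0 \<le> (\<Sum>j\<in>UNIV. \<delta> j)" by (rule sum_nonneg) (use h(2) in auto)
    then have "(\<Sum>j\<in>UNIV. \<delta> j) = 0" using h(1) by simp
    then have "\<forall>j. \<delta> j = 0" using h(2) by (simp add: sum_nonneg_eq_0_iff)
    then have "(\<lambda>j. \<gamma> j + \<delta> j) = \<gamma>" by auto
    then show "B \<in> M (\<lambda>j. \<gamma> j + \<delta> j) \<and> fB B (\<lambda>j. \<gamma> j + \<delta> j) = fB B \<gamma>" using h by simp
  qed
next
  case (Suc n)
  show ?case
  proof (intro allI impI)
    fix \<gamma> \<delta> :: "'a \<Rightarrow> int"
    assume h: "nat (\<Sum>j\<in>UNIV. \<delta> j) = Suc n" "\<forall>j. 0 \<le> \<delta> j" "\<forall>j. j \<notin> B \<longrightarrow> \<delta> j = 0" "B \<in> M \<gamma>"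
    obtain i where i: "0 < \<delta> i" using pick[OF h(2)] h(1) by fastforce
    have iB: "i \<in> B" using h(3) i by force
    let ?d = "\<lambda>j. \<delta> j - indv {i} j"
    let ?c = "\<lambda>j. \<gamma> j + indv {i} j"
    have sd: "(\<Sum>j\<in>UNIV. ?d j) = (\<Sum>j\<in>UNIV. \<delta> j) - 1" by (simp add: sum_subtractf indv_def)
    have h1: "nat (\<Sum>j\<in>UNIV. ?d j) = n" using h(1) sd by simp
    have h2: "\<forall>j. 0 \<le> ?d j" using h(2) i by (auto simp: indv_def)
    have h3: "\<forall>j. j \<notin> B \<longrightarrow> ?d j = 0" using h(3) iB by (auto simp: indv_def)
    have st: "B \<in> M ?c \<and> fB B ?c = fB B \<gamma>" using stepB[OF h(4) iB] .
    have e: "(\<lambda>j. ?c j + ?d j) = (\<lambda>j. \<gamma> j + \<delta> j)" by auto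
    show "B \<in> M (\<lambda>j. \<gamma> j + \<delta> j) \<and> fB B (\<lambda>j. \<gamma> j + \<delta> j) = fB B \<gamma>"
    proof -
      have "B \<in> M (\<lambda>j. ?c j + ?d j) \<and> fB B (\<lambda>j. ?c j + ?d j) = fB B ?c"
        using spec[OF spec[OF Suc.IH, of ?c], of ?d] h1 h2 h3 st by blast
      then show ?thesis using st e by simp
    qed
  qed
qed

lemma lemN: "\<forall>\<gamma> \<delta>. nat (\<Sum>j\<in>UNIV. \<delta> j) = n \<longrightarrow> (\<forall>j. 0 \<le> \<delta> j) \<longrightarrow> (\<forall>j. j \<in> B \<longrightarrow> \<delta> j = 0)
   \<longrightarrow> fB B (\<lambda>j. \<gamma> j + \<delta> j) \<le> fB B \<gamma>"
proof (induction n)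
  case 0
  show ?case
  proof (intro allI impI)
    fix \<gamma> \<delta> :: "'a \<Rightarrow> int"
    assume h: "nat (\<Sum>j\<in>UNIV. \<delta> j) = 0" "\<forall>j. 0 \<le> \<delta> j" "\<forall>j. j \<in> B \<longrightarrow> \<delta> j = 0"
    have "0 \<le> (\<Sum>j\<in>UNIV. \<delta> j)" by (rule sum_nonneg) (use h(2) in auto)
    then have "(\<Sum>j\<in>UNIV. \<delta> j) = 0" using h(1) by simp
    then have "\<forall>j. \<delta> j = 0" using h(2) by (simp add: sum_nonneg_eq_0_iff)
    then have "(\<lambda>j. \<gamma> j + \<delta> j) = \<gamma>" by auto
    then show "fB B (\<lambda>j. \<gamma> j + \<delta> j) \<le> fB B \<gamma>" by simp
  qed
next
  case (Suc n)
  show ?case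
  proof (intro allI impI)
    fix \<gamma> \<delta> :: "'a \<Rightarrow> int"
    assume h: "nat (\<Sum>j\<in>UNIV. \<delta> j) = Suc n" "\<forall>j. 0 \<le> \<delta> j" "\<forall>j. j \<in> B \<longrightarrow> \<delta> j = 0"
    obtain i where i: "0 < \<delta> i" using pick[OF h(2)] h(1) by fastforce
    have iB: "i \<notin> B" using h(3) i by force
    let ?d = "\<lambda>j. \<delta> j - indv {i} j"
    let ?c = "\<lambda>j. \<gamma> j + indv {i} j"
    have sd: "(\<Sum>j\<in>UNIV. ?d j) = (\<Sum>j\<in>UNIV. \<delta> j) - 1" by (simp add: sum_subtractf indv_def)
    have h1: "nat (\<Sum>j\<in>UNIV. ?d j) = n" using h(1) sd by simp
    have h2: "\<forall>j. 0 \<le> ?d j" using h(2) i by (auto simp: indv_def)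
    have h3: "\<forall>j. j \<in> B \<longrightarrow> ?d j = 0" using h(3) iB by (auto simp: indv_def)
    have st: "fB B ?c \<le> fB B \<gamma>" using stepN[OF iB] .
    have e: "(\<lambda>j. ?c j + ?d j) = (\<lambda>j. \<gamma> j + \<delta> j)" by auto
    show "fB B (\<lambda>j. \<gamma> j + \<delta> j) \<le> fB B \<gamma>"
    proof -
      have "fB B (\<lambda>j. ?c j + ?d j) \<le> fB B ?c"
        using spec[OF spec[OF Suc.IH, of ?c], of ?d] h1 h2 h3 by blast
      then show ?thesis using st e by simp
    qed
  qed
qed

lemma shiftK: assumes "card B = d" shows "fB B (\<lambda>j. \<alpha> j + int K) = fB B \<alpha>"
proof (induction K)
  case 0 then show ?case by simp
next
  case (Suc K)
  let ?a = "\<lambda>j. \<alpha> j + int K"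
  have e: "(\<lambda>j. \<alpha> j + int (Suc K)) = (\<lambda>j. ?a j + indv UNIV j)" by (auto simp: indv_def)
  have "mrank (M ?a) UNIV = d" using mrank_UNIV[OF matM[OF fl]] .
  moreover have "(\<Sum>j\<in>B. ?a j + indv UNIV j) = (\<Sum>j\<in>B. ?a j) + int d"
    using assms by (simp add: sum.distrib indv_def)
  ultimately have "fB B (\<lambda>j. ?a j + indv UNIV j) = fB B ?a"
    unfolding fB_def using gI[of ?a UNIV] by simp
  then show ?case using e Suc by simp
qed

lemma sub2: assumes "B \<in> M \<beta>" shows "B \<in> support_bases d M"
proof -
  have cB: "card B = d" using cardB[OF matM[OF fl] assms] .
  have ge: "fB B \<alpha> \<le> fB B \<beta>" if "\<forall>j. \<beta> j \<le> \<alpha> j" for \<alpha>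
  proof -
    let ?dB = "\<lambda>j. if j \<in> B then \<alpha> j - \<beta> j else 0"
    let ?dN = "\<lambda>j. if j \<in> B then 0 else \<alpha> j - \<beta> j"
    let ?b1 = "\<lambda>j. \<beta> j + ?dB j"
    have A: "B \<in> M ?b1 \<and> fB B ?b1 = fB B \<beta>"
      using spec[OF spec[OF lemA[of "nat (\<Sum>j\<in>UNIV. ?dB j)" B], of \<beta>], of ?dB] that assms by auto
    have N: "fB B (\<lambda>j. ?b1 j + ?dN j) \<le> fB B ?b1"
      using spec[OF spec[OF lemN[of "nat (\<Sum>j\<in>UNIV. ?dN j)" B], of ?b1], of ?dN] that by auto
    have "(\<lambda>j. ?b1 j + ?dN j) = \<alpha>" by auto
    then show ?thesis using A N by simp
  qed
  have all: "fB B \<alpha> \<le> fB B \<beta>" for \<alpha>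
  proof -
    let ?K = "nat (\<Sum>j\<in>UNIV. \<bar>\<beta> j - \<alpha> j\<bar>)"
    have "\<bar>\<beta> j - \<alpha> j\<bar> \<le> (\<Sum>j\<in>UNIV. \<bar>\<beta> j - \<alpha> j\<bar>)" for j by (rule member_le_sum) auto
    moreover have "0 \<le> (\<Sum>j\<in>UNIV. \<bar>\<beta> j - \<alpha> j\<bar>)" by (simp add: sum_nonneg)
    then have "int ?K = (\<Sum>j\<in>UNIV. \<bar>\<beta> j - \<alpha> j\<bar>)" by simp
    ultimately have "\<forall>j. \<beta> j \<le> \<alpha> j + int ?K"
    proof -
      assume h1: "\<And>j. \<bar>\<beta> j - \<alpha> j\<bar> \<le> (\<Sum>j\<in>UNIV. \<bar>\<beta> j - \<alpha> j\<bar>)"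
        and h2: "int ?K = (\<Sum>j\<in>UNIV. \<bar>\<beta> j - \<alpha> j\<bar>)"
      show ?thesis
      proof
        fix j
        have "\<beta> j - \<alpha> j \<le> \<bar>\<beta> j - \<alpha> j\<bar>" by (rule abs_ge_self)
        then show "\<beta> j \<le> \<alpha> j + int ?K" using h1[of j] h2 by linarith
      qed
    qed
    then have "fB B (\<lambda>j. \<alpha> j + int ?K) \<le> fB B \<beta>" by (rule ge)
    then show ?thesis using shiftK[OF cB, of \<alpha> ?K] by linarith
  qed
  have "flock_nu M B \<le> ereal (real_of_int (fB B \<beta>))"
    unfolding flock_nu_def
  proof (rule SUP_least)
    fix \<alpha> :: "'a \<Rightarrow> int"
    show "ereal (real_of_int ((\<Sum>i\<in>B. \<alpha> i) - flock_g M \<alpha>)) \<le> ereal (real_of_int (fB B \<beta>))"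
      using all[of \<alpha>] unfolding fB_def by (simp only: ereal_less_eq(3) of_int_le_iff)
  qed
  then have "flock_nu M B < \<infinity>" by (rule order.strict_trans1) simp
  then show ?thesis unfolding support_bases_def using cB by simp
qed

end

theorem mainTheorem14:
  fixes M :: "('a::finite \<Rightarrow> int) \<Rightarrow> 'a set set" and d :: nat
  assumes "matroid_flock d M"
  shows "support_bases d M = (\<Union>\<alpha>. M \<alpha>)"
proof (rule set_eqI)
  fix B
  show "B \<in> support_bases d M \<longleftrightarrow> B \<in> (\<Union>\<alpha>. M \<alpha>)"
  proof
    assume "B \<in> support_bases d M"
    then obtain \<alpha> where "B \<in> M \<alpha>" using sub1[OF assms] by blast
    then show "B \<in> (\<Union>\<alpha>. M \<alpha>)" by blast
  next
    assume "B \<in> (\<Union>\<alpha>. M \<alpha>)"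
    then obtain \<alpha> where "B \<in> M \<alpha>" by blast
    then show "B \<in> support_bases d M" by (rule sub2[OF assms])
  qed
qed


end
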